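(* Let $n\ge 1$ and let $\varphi(x)$ be any finite Boolean combination of polynomial equations $t(x)=0$ and inequations $u(x)\neq 0$, with $t,u\in\mathbb{C}[x_1,\dots,x_n]$, in the variables $x\in\mathbb{C}^n$. Then there exist polynomials $p,q\in\mathbb{C}[a,b,x_1,\dots,x_n]$ (with $a,b$ single scalar variables) such that for all $x\in\mathbb{C}^n$: $$\varphi(x)\iff(\exists a\in\mathbb{C})(\forall b\in\mathbb{C})\;p(a,b,x)=0,$$ $$\varphi(x)\iff(\forall a\in\mathbb{C})(\exists b\in\mathbb{C})\;q(a,b,x)=0.$$
   Context: A Boolean combination of polynomial equations and inequations is a formula built from atomic formulas of the form $t(x)=0$ and $u(x)\neq 0$ (with $t,u$ polynomials in $x=(x_1,\dots,x_n)$) using finitely many applications of $\wedge,\vee,\neg$. *)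

theory Defs
  imports Complex_Main
begin

text \<open>Multivariate polynomials over the complex numbers, represented as
  polynomial expressions in the variables X 0, X 1, ... .  Since the
  statement only concerns the polynomial functions they define (and over
  the infinite field of complex numbers polynomials and polynomial functions
  coincide), this is a faithful rendering of C[x_1,...,x_n].\<close>

datatype mpoly = Var nat | Const complex | Add mpoly mpoly | Mul mpoly mpoly

fun peval :: "mpoly \<Rightarrow> complex list \<Rightarrow> complex" where
  "peval (Var i) xs = xs ! i"
| "peval (Const c) xs = c"
| "peval (Add p q) xs = peval p xs + peval q xs"
| "peval (Mul p q) xs = peval p xs * peval q xs"

fun pvars :: "mpoly \<Rightarrow> nat set" where
  "pvars (Var i) = {i}"
| "pvars (Const c) = {}"
| "pvars (Add p q) = pvars p \<union> pvars q"
| "pvars (Mul p q) = pvars p \<union> pvars q"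

datatype fm = Eq0 mpoly | Neq0 mpoly | FAnd fm fm | FOr fm fm | FNot fm

fun holds :: "fm \<Rightarrow> complex list \<Rightarrow> bool" where
  "holds (Eq0 t) xs = (peval t xs = 0)"
| "holds (Neq0 u) xs = (peval u xs \<noteq> 0)"
| "holds (FAnd f g) xs = (holds f xs \<and> holds g xs)"
| "holds (FOr f g) xs = (holds f xs \<or> holds g xs)"
| "holds (FNot f) xs = (\<not> holds f xs)"

fun fvars :: "fm \<Rightarrow> nat set" where
  "fvars (Eq0 t) = pvars t"
| "fvars (Neq0 u) = pvars u"
| "fvars (FAnd f g) = fvars f \<union> fvars g"
| "fvars (FOr f g) = fvars f \<union> fvars g"
| "fvars (FNot f) = fvars f"

end

theory Submission
  imports Defs "HOL-Computational_Algebra.Fundamental_Theorem_Algebra"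
begin

fun tp :: "mpoly \<Rightarrow> complex \<Rightarrow> complex list \<Rightarrow> complex poly" where
  "tp (Var i) a xs = (if i = 0 then [:a:] else if i = 1 then [:0,1:] else [:xs ! (i-2):])"
| "tp (Const c) a xs = [:c:]"
| "tp (Add p q) a xs = tp p a xs + tp q a xs"
| "tp (Mul p q) a xs = tp p a xs * tp q a xs"

lemma tp_eval: "poly (tp p a xs) b = peval p (a # b # xs)"
proof (induction p)
  case (Var i)
  then show ?case by (cases i; cases "i - 1"; auto simp: nth_Cons')
qed auto

lemma union_lem:
  assumes "\<forall>b. peval F (a#b#xs) * peval G (a#b#xs) = 0"
  shows "(\<forall>b. peval F (a#b#xs) = 0) \<or> (\<forall>b. peval G (a#b#xs) = 0)"
proof -
  have "\<forall>b. poly (tp F a xs * tp G a xs) b = 0" using assms by (simp add: tp_eval)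
  then have "tp F a xs * tp G a xs = 0" using poly_all_0_iff_0 by blast
  then have "tp F a xs = 0 \<or> tp G a xs = 0" by simp
  then show ?thesis by (metis poly_0 tp_eval)
qed

fun sb :: "mpoly \<Rightarrow> mpoly" where
  "sb (Var i) = (if i = 1 then Mul (Var 1) (Var 1) else Var i)"
| "sb (Const c) = Const c"
| "sb (Add p q) = Add (sb p) (sb q)"
| "sb (Mul p q) = Mul (sb p) (sb q)"

lemma sb_eval: "peval (sb p) (a#b#xs) = peval p (a#(b*b)#xs)"
proof (induction p)
  case (Var i)
  then show ?case by (cases i; cases "i - 1"; auto)
qed auto

lemma sb_vars: "pvars (sb p) \<subseteq> pvars p \<union> {1}"
  by (induction p) auto

definition conjP :: "mpoly \<Rightarrow> mpoly \<Rightarrow> mpoly" where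
  "conjP F G = Add (sb F) (Mul (Var 1) (sb G))"

lemma conj_lem:
  "(\<forall>b. peval (conjP F G) (a#b#xs) = 0) \<longleftrightarrow>
   (\<forall>b. peval F (a#b#xs) = 0) \<and> (\<forall>b. peval G (a#b#xs) = 0)"
proof
  assume H: "\<forall>b. peval (conjP F G) (a#b#xs) = 0"
  have e: "peval F (a#(b*b)#xs) + b * peval G (a#(b*b)#xs) = 0" for b
    using H[rule_format, of b] by (simp add: conjP_def sb_eval)
  have f2: "peval F (a#(b*b)#xs) = 0" and g2: "b * peval G (a#(b*b)#xs) = 0" for b
  proof -
    have "peval F (a#(b*b)#xs) - b * peval G (a#(b*b)#xs) = 0"
      using e[of "-b"] by simp
    then show "peval F (a#(b*b)#xs) = 0" "b * peval G (a#(b*b)#xs) = 0"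
      using e[of b] by (auto simp: algebra_simps)
  qed
  have "\<forall>c. peval F (a#c#xs) = 0"
  proof
    fix c
    have "csqrt c * csqrt c = c" by (metis power2_csqrt power2_eq_square)
    then show "peval F (a#c#xs) = 0" using f2[of "csqrt c"] by simp
  qed
  moreover have "\<forall>b. peval (Var 1) (a#b#xs) * peval (sb G) (a#b#xs) = 0"
    using g2 by (simp add: sb_eval)
  then have "(\<forall>b. peval (Var 1) (a#b#xs) = 0) \<or> (\<forall>b. peval (sb G) (a#b#xs) = 0)"
    by (rule union_lem)
  then have "\<forall>b. peval G (a#(b*b)#xs) = 0"
    by (auto simp: sb_eval)
  then have "\<forall>c. peval G (a#c#xs) = 0"
    by (metis power2_csqrt power2_eq_square)
  ultimately show "(\<forall>b. peval F (a#b#xs) = 0) \<and> (\<forall>b. peval G (a#b#xs) = 0)" by blast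
next
  assume "(\<forall>b. peval F (a#b#xs) = 0) \<and> (\<forall>b. peval G (a#b#xs) = 0)"
  then show "\<forall>b. peval (conjP F G) (a#b#xs) = 0" by (simp add: conjP_def sb_eval)
qed

lemma fta_lem:
  "(\<exists>b. peval (Add (Mul (Var 1) P) (Const (-1))) (a#b#xs) = 0) \<longleftrightarrow>
   \<not> (\<forall>b. peval P (a#b#xs) = 0)"
proof -
  have ev: "peval (Add (Mul (Var 1) P) (Const (-1))) (a#b#xs) = poly (pCons (-1) (tp P a xs)) b" for b
    by (simp add: tp_eval)
  show ?thesis
  proof
    assume "\<exists>b. peval (Add (Mul (Var 1) P) (Const (-1))) (a#b#xs) = 0"
    then obtain b where "b * peval P (a#b#xs) = 1" by auto
    then show "\<not> (\<forall>b. peval P (a#b#xs) = 0)" by (metis mult_zero_right zero_neq_one)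
  next
    assume "\<not> (\<forall>b. peval P (a#b#xs) = 0)"
    then have "tp P a xs \<noteq> 0" by (metis poly_0 tp_eval)
    then have "\<exists>z. poly (pCons (-1) (tp P a xs)) z = 0"
      by (intro fundamental_theorem_of_algebra_alt) auto
    then show "\<exists>b. peval (Add (Mul (Var 1) P) (Const (-1))) (a#b#xs) = 0"
      using ev by metis
  qed
qed

fun shift :: "mpoly \<Rightarrow> mpoly" where
  "shift (Var i) = Var (i + 2)"
| "shift (Const c) = Const c"
| "shift (Add p q) = Add (shift p) (shift q)"
| "shift (Mul p q) = Mul (shift p) (shift q)"

lemma shift_eval: "peval (shift p) (a#b#xs) = peval p xs"
  by (induction p) auto

lemma shift_vars: "pvars (shift p) = (\<lambda>i. i + 2) ` pvars p"
  by (induction p) auto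


definition sem :: "(mpoly list \<times> mpoly) list \<Rightarrow> complex list \<Rightarrow> bool" where
  "sem L xs = (\<exists>c\<in>set L. (\<forall>t\<in>set (fst c). peval t xs = 0) \<and> peval (snd c) xs \<noteq> 0)"

definition okL :: "nat set \<Rightarrow> (mpoly list \<times> mpoly) list \<Rightarrow> bool" where
  "okL V L = (\<forall>c\<in>set L. (\<forall>t\<in>set (fst c). pvars t \<subseteq> V) \<and> pvars (snd c) \<subseteq> V)"

definition rep :: "nat set \<Rightarrow> (complex list \<Rightarrow> bool) \<Rightarrow> bool" where
  "rep V P = (\<exists>L. okL V L \<and> (\<forall>xs. P xs = sem L xs))"

lemma rep_or: "rep V P \<Longrightarrow> rep V Q \<Longrightarrow> rep V (\<lambda>xs. P xs \<or> Q xs)"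
  unfolding rep_def
  apply (elim exE conjE)
  subgoal for L1 L2 by (rule exI[of _ "L1 @ L2"]) (unfold okL_def sem_def set_append ball_Un bex_Un, blast)
  done

definition prodLL :: "(mpoly list \<times> mpoly) list \<Rightarrow> (mpoly list \<times> mpoly) list \<Rightarrow> (mpoly list \<times> mpoly) list" where
  "prodLL L1 L2 = concat (map (\<lambda>c1. map (\<lambda>c2. (fst c1 @ fst c2, Mul (snd c1) (snd c2))) L2) L1)"

lemma prodLL_mem: "c \<in> set (prodLL L1 L2) \<longleftrightarrow>
  (\<exists>c1\<in>set L1. \<exists>c2\<in>set L2. c = (fst c1 @ fst c2, Mul (snd c1) (snd c2)))"
  unfolding prodLL_def by auto

lemma rep_and: "rep V P \<Longrightarrow> rep V Q \<Longrightarrow> rep V (\<lambda>xs. P xs \<and> Q xs)"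
proof -
  assume "rep V P" "rep V Q"
  then obtain L1 L2 where o1: "okL V L1" and e1: "\<forall>xs. P xs = sem L1 xs"
    and o2: "okL V L2" and e2: "\<forall>xs. Q xs = sem L2 xs" unfolding rep_def by blast
  have "okL V (prodLL L1 L2)"
    unfolding okL_def
  proof (intro ballI)
    fix c assume "c \<in> set (prodLL L1 L2)"
    then obtain c1 c2 where c: "c1 \<in> set L1" "c2 \<in> set L2" "fst c = fst c1 @ fst c2" "snd c = Mul (snd c1) (snd c2)"
      unfolding prodLL_mem by auto
    have "(\<forall>t\<in>set (fst c1). pvars t \<subseteq> V) \<and> pvars (snd c1) \<subseteq> V" using o1 c(1) unfolding okL_def by auto
    moreover have "(\<forall>t\<in>set (fst c2). pvars t \<subseteq> V) \<and> pvars (snd c2) \<subseteq> V" using o2 c(2) unfolding okL_def by auto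
    ultimately show "(\<forall>t\<in>set (fst c). pvars t \<subseteq> V) \<and> pvars (snd c) \<subseteq> V" using c by auto
  qed
  moreover have "P xs \<and> Q xs \<longleftrightarrow> sem (prodLL L1 L2) xs" for xs
  proof -
    let ?g = "\<lambda>c. (\<forall>t\<in>set (fst c). peval t xs = 0) \<and> peval (snd c) xs \<noteq> 0"
    have s: "sem L xs \<longleftrightarrow> (\<exists>c\<in>set L. ?g c)" for L unfolding sem_def by auto
    have "(\<exists>c\<in>set (prodLL L1 L2). ?g c) \<longleftrightarrow> (\<exists>c1\<in>set L1. \<exists>c2\<in>set L2. ?g (fst c1 @ fst c2, Mul (snd c1) (snd c2)))"
    proof
      assume "\<exists>c\<in>set (prodLL L1 L2). ?g c"
      then obtain c where c: "c \<in> set (prodLL L1 L2)" "?g c" by blast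
      then obtain c1 c2 where h: "c1 \<in> set L1" "c2 \<in> set L2" "c = (fst c1 @ fst c2, Mul (snd c1) (snd c2))"
        unfolding prodLL_mem by blast
      show "\<exists>c1\<in>set L1. \<exists>c2\<in>set L2. ?g (fst c1 @ fst c2, Mul (snd c1) (snd c2))"
        using h c(2) by blast
    next
      assume "\<exists>c1\<in>set L1. \<exists>c2\<in>set L2. ?g (fst c1 @ fst c2, Mul (snd c1) (snd c2))"
      then obtain c1 c2 where "c1\<in>set L1" "c2\<in>set L2" "?g (fst c1 @ fst c2, Mul (snd c1) (snd c2))" by blast
      moreover have "(fst c1 @ fst c2, Mul (snd c1) (snd c2)) \<in> set (prodLL L1 L2)"
        unfolding prodLL_mem using calculation by blast
      ultimately show "\<exists>c\<in>set (prodLL L1 L2). ?g c" by blast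
    qed
    also have "\<dots> \<longleftrightarrow> (\<exists>c1\<in>set L1. \<exists>c2\<in>set L2. ?g c1 \<and> ?g c2)" by auto
    also have "\<dots> \<longleftrightarrow> (\<exists>c1\<in>set L1. ?g c1) \<and> (\<exists>c2\<in>set L2. ?g c2)" by blast
    finally show ?thesis using e1 e2 s by blast
  qed
  ultimately show ?thesis unfolding rep_def by blast
qed

lemma rep_true: "rep V (\<lambda>xs. True)"
  unfolding rep_def by (rule exI[of _ "[([], Const 1)]"]) (auto simp: okL_def sem_def)

lemma rep_clause: "(\<forall>t\<in>set ts. pvars t \<subseteq> V) \<Longrightarrow> pvars u \<subseteq> V \<Longrightarrow>
  rep V (\<lambda>xs. \<not> ((\<forall>t\<in>set ts. peval t xs = 0) \<and> peval u xs \<noteq> 0))"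
  unfolding rep_def
  by (rule exI[of _ "map (\<lambda>t. ([], t)) ts @ [([u], Const 1)]"]) (auto simp: okL_def sem_def)

lemma rep_not_sem: "okL V L \<Longrightarrow> rep V (\<lambda>xs. \<not> sem L xs)"
proof (induction L)
  case Nil
  then show ?case using rep_true by (simp add: sem_def)
next
  case (Cons c L)
  obtain ts u where c: "c = (ts, u)" by force
  have ok: "okL V L" using Cons.prems by (simp add: okL_def)
  have "rep V (\<lambda>xs. \<not> ((\<forall>t\<in>set ts. peval t xs = 0) \<and> peval u xs \<noteq> 0) \<and> \<not> sem L xs)"
    using Cons.prems c by (intro rep_and rep_clause Cons.IH ok) (auto simp: okL_def)
  moreover have "(\<lambda>xs. \<not> sem (c # L) xs) = (\<lambda>xs. \<not> ((\<forall>t\<in>set ts. peval t xs = 0) \<and> peval u xs \<noteq> 0) \<and> \<not> sem L xs)"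
    by (auto simp: sem_def c)
  ultimately show ?case by simp
qed

lemma rep_not: "rep V P \<Longrightarrow> rep V (\<lambda>xs. \<not> P xs)"
  using rep_not_sem unfolding rep_def by (metis (no_types, lifting))

lemma rep_cong: "rep V P \<Longrightarrow> (\<And>xs. P xs = Q xs) \<Longrightarrow> rep V Q"
proof -
  assume "rep V P" "\<And>xs. P xs = Q xs"
  then have "P = Q" by blast
  then show ?thesis using \<open>rep V P\<close> by simp
qed

lemma rep_holds: "fvars \<phi> \<subseteq> V \<Longrightarrow> rep V (holds \<phi>)"
proof (induction \<phi>)
  case (Eq0 t)
  show ?case unfolding rep_def using Eq0
    by (intro exI[of _ "[([t], Const 1)]"]) (auto simp: okL_def sem_def)
next
  case (Neq0 u)
  show ?case unfolding rep_def using Neq0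
    by (intro exI[of _ "[([], u)]"]) (auto simp: okL_def sem_def)
next
  case (FAnd f g)
  then show ?case using rep_and[of V "holds f" "holds g"] by (simp add: rep_cong)
next
  case (FOr f g)
  then show ?case using rep_or[of V "holds f" "holds g"] by simp
next
  case (FNot f)
  then show ?case using rep_not[of V "holds f"] by simp
qed

fun conjL :: "mpoly list \<Rightarrow> mpoly" where
  "conjL [] = Const 0"
| "conjL (F # Fs) = conjP F (conjL Fs)"

lemma conjL_eval: "(\<forall>b. peval (conjL Fs) (a#b#xs) = 0) \<longleftrightarrow> (\<forall>F\<in>set Fs. \<forall>b. peval F (a#b#xs) = 0)"
  by (induction Fs) (auto simp: conj_lem)

fun prodL :: "mpoly list \<Rightarrow> mpoly" where
  "prodL [] = Const 1"
| "prodL (F # Fs) = Mul F (prodL Fs)"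

lemma prodL_eval: "(\<forall>b. peval (prodL Fs) (a#b#xs) = 0) \<longleftrightarrow> (\<exists>F\<in>set Fs. \<forall>b. peval F (a#b#xs) = 0)"
proof (induction Fs)
  case (Cons F Fs)
  show ?case
  proof
    assume "\<forall>b. peval (prodL (F # Fs)) (a # b # xs) = 0"
    then have "(\<forall>b. peval F (a#b#xs) = 0) \<or> (\<forall>b. peval (prodL Fs) (a#b#xs) = 0)"
      by (intro union_lem) simp
    then show "\<exists>F'\<in>set (F # Fs). \<forall>b. peval F' (a # b # xs) = 0" using Cons.IH by auto
  next
    assume "\<exists>F'\<in>set (F # Fs). \<forall>b. peval F' (a # b # xs) = 0"
    then show "\<forall>b. peval (prodL (F # Fs)) (a # b # xs) = 0" using Cons.IH by auto
  qed
qed simp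

lemma conjL_vars: "1 \<in> K \<Longrightarrow> \<forall>F\<in>set Fs. pvars F \<subseteq> K \<Longrightarrow> pvars (conjL Fs) \<subseteq> K"
  by (induction Fs) (use sb_vars in \<open>fastforce simp: conjP_def\<close>)+

lemma prodL_vars: "\<forall>F\<in>set Fs. pvars F \<subseteq> K \<Longrightarrow> pvars (prodL Fs) \<subseteq> K"
  by (induction Fs) auto

definition mkZ :: "mpoly list \<times> mpoly \<Rightarrow> mpoly" where
  "mkZ c = conjL (Add (Mul (Var 0) (shift (snd c))) (Const (-1)) # map shift (fst c))"

lemma mkZ_eval0: "(\<exists>a. \<forall>b. peval (mkZ (ts,u)) (a#b#xs) = 0) \<longleftrightarrow>
  (\<forall>t\<in>set ts. peval t xs = 0) \<and> peval u xs \<noteq> 0"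
proof -
  have "(\<exists>a. \<forall>b. peval (mkZ (ts,u)) (a#b#xs) = 0) \<longleftrightarrow>
     (\<exists>a. a * peval u xs - 1 = 0 \<and> (\<forall>t\<in>set ts. peval t xs = 0))"
    by (simp add: mkZ_def conj_lem conjL_eval shift_eval)
  also have "\<dots> \<longleftrightarrow> (\<forall>t\<in>set ts. peval t xs = 0) \<and> peval u xs \<noteq> 0"
  proof
    assume "\<exists>a. a * peval u xs - 1 = 0 \<and> (\<forall>t\<in>set ts. peval t xs = 0)"
    then show "(\<forall>t\<in>set ts. peval t xs = 0) \<and> peval u xs \<noteq> 0" by auto
  next
    assume "(\<forall>t\<in>set ts. peval t xs = 0) \<and> peval u xs \<noteq> 0"
    then show "\<exists>a. a * peval u xs - 1 = 0 \<and> (\<forall>t\<in>set ts. peval t xs = 0)"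
      by (intro exI[of _ "inverse (peval u xs)"]) auto
  qed
  finally show ?thesis .
qed

lemma mkZ_eval: "(\<exists>a. \<forall>b. peval (mkZ c) (a#b#xs) = 0) \<longleftrightarrow>
  (\<forall>t\<in>set (fst c). peval t xs = 0) \<and> peval (snd c) xs \<noteq> 0"
  using mkZ_eval0[of "fst c" "snd c" xs] by simp

lemma Eform:
  assumes "fvars \<phi> \<subseteq> {..<n}"
  shows "\<exists>p. pvars p \<subseteq> {..<n+2} \<and> (\<forall>xs. holds \<phi> xs \<longleftrightarrow> (\<exists>a. \<forall>b. peval p (a # b # xs) = 0))"
proof -
  obtain L where ok: "okL {..<n} L" and L: "\<And>xs. holds \<phi> xs = sem L xs"
    using rep_holds[OF assms] unfolding rep_def by blast
  define p where "p = prodL (map mkZ L)"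
  have vs: "pvars (shift q) \<subseteq> {..<n+2}" if "pvars q \<subseteq> {..<n}" for q
    using that by (auto simp: shift_vars)
  have "pvars (mkZ c) \<subseteq> {..<n+2}" if "c \<in> set L" for c
  proof -
    obtain ts u where c: "c = (ts,u)" by force
    have "(\<forall>t\<in>set (fst c). pvars t \<subseteq> {..<n}) \<and> pvars (snd c) \<subseteq> {..<n}" using ok that by (simp add: okL_def)
    then have "pvars u \<subseteq> {..<n}" "\<forall>t\<in>set ts. pvars t \<subseteq> {..<n}" using c by auto
    then show ?thesis unfolding mkZ_def c using vs
      by (intro conjL_vars) auto
  qed
  then have "pvars p \<subseteq> {..<n+2}" unfolding p_def by (intro prodL_vars) auto
  moreover have "holds \<phi> xs \<longleftrightarrow> (\<exists>a. \<forall>b. peval p (a # b # xs) = 0)" for xs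
  proof -
    have "(\<exists>a. \<forall>b. peval p (a # b # xs) = 0) \<longleftrightarrow> (\<exists>c\<in>set L. \<exists>a. \<forall>b. peval (mkZ c) (a#b#xs) = 0)"
      unfolding p_def prodL_eval by auto
    also have "\<dots> \<longleftrightarrow> sem L xs" unfolding sem_def mkZ_eval by (rule refl)
    finally show ?thesis using L by simp
  qed
  ultimately show ?thesis by blast
qed

theorem theorem1p1:
  fixes n :: nat and \<phi> :: fm
  assumes "n \<ge> 1"
    and "fvars \<phi> \<subseteq> {..<n}"
  shows "\<exists>p q. pvars p \<subseteq> {..<n+2} \<and> pvars q \<subseteq> {..<n+2} \<and>
    (\<forall>xs. length xs = n \<longrightarrow>
       (holds \<phi> xs \<longleftrightarrow> (\<exists>a. \<forall>b. peval p (a # b # xs) = 0)) \<and>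
       (holds \<phi> xs \<longleftrightarrow> (\<forall>a. \<exists>b. peval q (a # b # xs) = 0)))"
proof -
  obtain p where p: "pvars p \<subseteq> {..<n+2}" "\<And>xs. holds \<phi> xs \<longleftrightarrow> (\<exists>a. \<forall>b. peval p (a # b # xs) = 0)"
    using Eform[OF assms(2)] by blast
  obtain p' where p': "pvars p' \<subseteq> {..<n+2}" "\<And>xs. holds (FNot \<phi>) xs \<longleftrightarrow> (\<exists>a. \<forall>b. peval p' (a # b # xs) = 0)"
    using Eform[of "FNot \<phi>" n] assms(2) by auto
  define q where "q = Add (Mul (Var 1) p') (Const (-1))"
  have "pvars q \<subseteq> {..<n+2}" using p' by (auto simp: q_def)
  moreover have "holds \<phi> xs \<longleftrightarrow> (\<forall>a. \<exists>b. peval q (a # b # xs) = 0)" for xs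
    using p'(2)[of xs] fta_lem[of p'] unfolding q_def by auto
  ultimately show ?thesis using p by blast
qed

end
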